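(* Let $\tau\in\mathbb N$, $\tau\ge1$. Let $\widehat C_a=\left(\frac{y\eta_{c,a}D}{\eta_{p,a}c_bc_2(1-p)}\right)^{\frac1{p+y-1}}$ and assume $\eta_{p,a}c_bc_2(1-p)(2-p)\ge Dy(y+1)\eta_{c,a}$, $y>1-p$, and $\Phi\ge0$. Let $\widetilde C_a=\arg\max_{C_a\in\{\lfloor\widehat C_a\rfloor,\lceil\widehat C_a\rceil\}}\underline U_a(C_a,\widetilde\Delta)$ be the attacker's robust equilibrium attacking extent (with $\widetilde\Delta$ the defenders' robust equilibrium protection extents). If $$\eta_{p,a}c_bc_2(1-p)\ge y\eta_{c,a}D\,\tau^{1-p-y},$$ then $\widehat C_a\le\tau$ and $\widetilde C_a\le\tau$, i.e. a $\tau$-equilibrium is achieved.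
   Context: Setting: a finite set $\mathcal C$ of defenders and one attacker. Defender $k$ chooses protection extent $\Delta_k\in[0,D]$; the attacker chooses attacking extent (number of rounds) $C_a\ge0$. Constants: $D>0$, $c_a,c_b,c_0,c_2>0$, $p\in(0,1)$, $x>0$, $y\ge0$; preference weights $\eta_{m,k},\eta_{p,k},\eta_{c,k}\in[0,1]$ summing to $1$, and $\eta_{p,a},\eta_{c,a}\in(0,1]$ with $\eta_{p,a}+\eta_{c,a}=1$. Protection cost $C(\Delta_k)=\Delta_k^x$, attacking cost $E(C_a)=1-C_a^{-y}$. The attacker's lower-bound payoff is, for $C_a>0$, $\underline U_a(C_a,\Delta)=\eta_{p,a}\sum_{k\in\mathcal C}\Big(1-\frac{c_b\Delta_k+c_bc_2C_a^{p-1}}{D}\Big)-\eta_{c,a}|\mathcal C|E(C_a)$, and $0$ for $C_a=0$. Robust equilibrium uses the infimum operator: each player maximizes his own lower-bound payoff given the others' strategies. A $\tau$-equilibrium is a robust equilibrium in which the attacker's attacking extent does not exceed $\tau$. $\Phi:=\frac{D}{c_b}|\mathcal C|-c_2|\mathcal C|\widehat C_a^{\,p-1}-\frac{\eta_{c,a}|\mathcal C|D}{\eta_{p,a}c_b}+\frac{\eta_{c,a}|\mathcal C|D}{\widehat C_a^{\,y}\eta_{p,a}c_b}$. *)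

theory Defs
  imports Complex_Main
begin

definition atk_cost :: "real \<Rightarrow> real \<Rightarrow> real" where
  "atk_cost y Ca = 1 - Ca powr (- y)"

definition U_att_lower ::
  "'k set \<Rightarrow> real \<Rightarrow> real \<Rightarrow> real \<Rightarrow> real \<Rightarrow> real \<Rightarrow> real \<Rightarrow> real \<Rightarrow> real \<Rightarrow> ('k \<Rightarrow> real) \<Rightarrow> real" where
  "U_att_lower C D cb c2 p y eta_pa eta_ca Ca \<Delta> =
     (if Ca = 0 then 0 else
       eta_pa * (\<Sum>k\<in>C. 1 - (cb * \<Delta> k + cb * c2 * Ca powr (p - 1)) / D)
       - eta_ca * real (card C) * atk_cost y Ca)"

definition C_hat :: "real \<Rightarrow> real \<Rightarrow> real \<Rightarrow> real \<Rightarrow> real \<Rightarrow> real \<Rightarrow> real \<Rightarrow> real" where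
  "C_hat D cb c2 p y eta_pa eta_ca =
     (y * eta_ca * D / (eta_pa * cb * c2 * (1 - p))) powr (1 / (p + y - 1))"

definition Phi :: "'k set \<Rightarrow> real \<Rightarrow> real \<Rightarrow> real \<Rightarrow> real \<Rightarrow> real \<Rightarrow> real \<Rightarrow> real \<Rightarrow> real" where
  "Phi C D cb c2 p y eta_pa eta_ca =
     (let Ch = C_hat D cb c2 p y eta_pa eta_ca; n = real (card C) in
       D / cb * n - c2 * n * Ch powr (p - 1) - eta_ca * n * D / (eta_pa * cb)
       + eta_ca * n * D / (Ch powr y * eta_pa * cb))"

end

theory Submission
  imports Defs
begin

theorem mainTheorem5:
  fixes C :: "'k set" and \<Delta>t :: "'k \<Rightarrow> real"
    and D ca cb c0 c2 p x y eta_pa eta_ca Ct :: real and \<tau> :: nat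
  assumes finC: "finite C"
    and D: "D > 0" and ca: "ca > 0" and cb: "cb > 0" and c0: "c0 > 0" and c2: "c2 > 0"
    and p: "0 < p" "p < 1" and x: "x > 0" and y0: "y \<ge> 0"
    and eta: "0 < eta_pa" "eta_pa \<le> 1" "0 < eta_ca" "eta_ca \<le> 1" "eta_pa + eta_ca = 1"
    and tau: "\<tau> \<ge> 1"
    and h1: "eta_pa * cb * c2 * (1 - p) * (2 - p) \<ge> D * y * (y + 1) * eta_ca"
    and h2: "y > 1 - p"
    and h3: "Phi C D cb c2 p y eta_pa eta_ca \<ge> 0"
    and Dt: "\<forall>k\<in>C. 0 \<le> \<Delta>t k \<and> \<Delta>t k \<le> D"
    and Ct_mem: "Ct \<in> {of_int \<lfloor>C_hat D cb c2 p y eta_pa eta_ca\<rfloor>,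
                       of_int \<lceil>C_hat D cb c2 p y eta_pa eta_ca\<rceil>}"
    and Ct_max: "\<forall>c\<in>{of_int \<lfloor>C_hat D cb c2 p y eta_pa eta_ca\<rfloor>,
                       of_int \<lceil>C_hat D cb c2 p y eta_pa eta_ca\<rceil>}.
                   U_att_lower C D cb c2 p y eta_pa eta_ca c \<Delta>t
                   \<le> U_att_lower C D cb c2 p y eta_pa eta_ca Ct \<Delta>t"
    and cond: "eta_pa * cb * c2 * (1 - p) \<ge> y * eta_ca * D * real \<tau> powr (1 - p - y)"
  shows "C_hat D cb c2 p y eta_pa eta_ca \<le> real \<tau> \<and> Ct \<le> real \<tau>"
proof -
  define e where "e = p + y - 1"
  have e: "e > 0" using h2 e_def by simp
  define A where "A = y * eta_ca * D / (eta_pa * cb * c2 * (1 - p))"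
  have den: "eta_pa * cb * c2 * (1 - p) > 0" using eta cb c2 p by simp
  have ypos: "y > 0" using h2 p by simp
  have Apos: "A > 0" unfolding A_def using den ypos eta D by simp
  have tpos: "real \<tau> > 0" using tau by simp
  have tp: "real \<tau> powr (1 - p - y) = inverse (real \<tau> powr e)"
    using tpos by (simp add: e_def powr_minus[symmetric] algebra_simps)
  have tepos: "real \<tau> powr e > 0" using tpos by simp
  have "y * eta_ca * D \<le> eta_pa * cb * c2 * (1 - p) * real \<tau> powr e"
  proof -
    have "y * eta_ca * D = y * eta_ca * D * real \<tau> powr (1 - p - y) * real \<tau> powr e"
      using tepos tp by simp
    also have "\<dots> \<le> eta_pa * cb * c2 * (1 - p) * real \<tau> powr e"
      using cond tepos by (simp add: mult_right_mono)
    finally show ?thesis .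
  qed
  hence AL: "A \<le> real \<tau> powr e" unfolding A_def using den
    by (simp add: divide_le_eq mult.commute)
  have Ch: "C_hat D cb c2 p y eta_pa eta_ca = A powr (1 / e)"
    unfolding C_hat_def A_def e_def by simp
  have "A powr (1/e) \<le> (real \<tau> powr e) powr (1/e)"
    using AL Apos e by (intro powr_mono2) auto
  also have "\<dots> = real \<tau>" using e tpos by (simp add: powr_powr)
  finally have c1: "C_hat D cb c2 p y eta_pa eta_ca \<le> real \<tau>" using Ch by simp
  have "\<lceil>C_hat D cb c2 p y eta_pa eta_ca\<rceil> \<le> int \<tau>"
    using c1 by (simp add: ceiling_le_iff)
  hence "of_int \<lceil>C_hat D cb c2 p y eta_pa eta_ca\<rceil> \<le> real \<tau>" by linarith
  moreover have "of_int \<lfloor>C_hat D cb c2 p y eta_pa eta_ca\<rfloor> \<le> real \<tau>"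
    using c1 by linarith
  ultimately show ?thesis using c1 Ct_mem by auto
qed

end
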